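(* Let $G$ and $H$ be co-$H$ spaces and $X$ a pointed space. Then composition of maps induces a well-defined homomorphism $e[G,H]\otimes e[H,X]\to e[G,X]$ (i.e. composition of congruence classes is bilinear).
   Context: Two pointed maps $f,g\colon A\to B$ are congruent if $\Sigma f\simeq\Sigma g$; $e[A,B]$ is the set of congruence classes of pointed maps $A\to B$. For a co-$H$ space $G$, $e[G,B]$ is an Abelian group with operation induced by the co-$H$ structure of $G$. *)

theory Defs
  imports "HOL-Analysis.Analysis"
begin

definition quotient_topology :: "'a topology \<Rightarrow> ('a \<Rightarrow> 'b) \<Rightarrow> 'b topology" where
  "quotient_topology X q =
     topology (\<lambda>U. U \<subseteq> q ` topspace X \<and> openin X {x \<in> topspace X. q x \<in> U})"

lemma istopology_quotient:
  "istopology (\<lambda>U. U \<subseteq> q ` topspace X \<and> openin X {x \<in> topspace X. q x \<in> U})"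
proof -
  have 1: "{x \<in> topspace X. q x \<in> S \<inter> T} = {x \<in> topspace X. q x \<in> S} \<inter> {x \<in> topspace X. q x \<in> T}" for S T
    by auto
  have 2: "{x \<in> topspace X. q x \<in> \<Union>K} = (\<Union>U\<in>K. {x \<in> topspace X. q x \<in> U})" for K
    by auto
  show ?thesis
    unfolding istopology_def 1 2 by blast
qed

lemma openin_quotient_topology:
  "openin (quotient_topology X q) U \<longleftrightarrow>
     U \<subseteq> q ` topspace X \<and> openin X {x \<in> topspace X. q x \<in> U}"
  by (simp add: quotient_topology_def istopology_quotient)

definition pointed_map :: "'a topology \<Rightarrow> 'a \<Rightarrow> 'b topology \<Rightarrow> 'b \<Rightarrow> ('a \<Rightarrow> 'b) \<Rightarrow> bool" where
  "pointed_map A a0 B b0 f \<longleftrightarrow> continuous_map A B f \<and> f a0 = b0"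

definition pointed_homotopic ::
  "'a topology \<Rightarrow> 'a \<Rightarrow> 'b topology \<Rightarrow> 'b \<Rightarrow> ('a \<Rightarrow> 'b) \<Rightarrow> ('a \<Rightarrow> 'b) \<Rightarrow> bool" where
  "pointed_homotopic A a0 B b0 f g \<longleftrightarrow> homotopic_with (\<lambda>h. h a0 = b0) A B f g"

text \<open>The reduced suspension of (A,a0) is the quotient of A \<times> [0,1] collapsing
  A \<times> {0} \<union> A \<times> {1} \<union> {a0} \<times> [0,1] to the base point None.\<close>

definition susp_pt :: "'a \<Rightarrow> 'a \<Rightarrow> real \<Rightarrow> ('a \<times> real) option" where
  "susp_pt a0 a t = (if a = a0 \<or> t = 0 \<or> t = 1 then None else Some (a, t))"

definition susp :: "'a topology \<Rightarrow> 'a \<Rightarrow> ('a \<times> real) option topology" where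
  "susp A a0 = quotient_topology (prod_topology A (top_of_set {0..1}))
                 (\<lambda>(a, t). susp_pt a0 a t)"

definition susp_fun :: "'b \<Rightarrow> ('a \<Rightarrow> 'b) \<Rightarrow> ('a \<times> real) option \<Rightarrow> ('b \<times> real) option" where
  "susp_fun b0 f z = (case z of None \<Rightarrow> None | Some (a, t) \<Rightarrow> susp_pt b0 (f a) t)"

definition congruent_maps ::
  "'a topology \<Rightarrow> 'a \<Rightarrow> 'b topology \<Rightarrow> 'b \<Rightarrow> ('a \<Rightarrow> 'b) \<Rightarrow> ('a \<Rightarrow> 'b) \<Rightarrow> bool" where
  "congruent_maps A a0 B b0 f g \<longleftrightarrow>
     pointed_homotopic (susp A a0) None (susp B b0) None (susp_fun b0 f) (susp_fun b0 g)"

text \<open>The wedge G \<or> G: quotient of the disjoint sum of two copies of G (indexed by bool)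
  identifying the two base points; base point (True, g0).\<close>

definition wedge_pt :: "'a \<Rightarrow> bool \<times> 'a \<Rightarrow> bool \<times> 'a" where
  "wedge_pt g0 z = (if snd z = g0 then (True, g0) else z)"

definition wedge :: "'a topology \<Rightarrow> 'a \<Rightarrow> (bool \<times> 'a) topology" where
  "wedge G g0 = quotient_topology (sum_topology (\<lambda>_. G) UNIV) (wedge_pt g0)"

text \<open>Fold map applied to f \<or> g : G \<or> G \<rightarrow> B.\<close>
definition wedge_fold :: "('a \<Rightarrow> 'b) \<Rightarrow> ('a \<Rightarrow> 'b) \<Rightarrow> bool \<times> 'a \<Rightarrow> 'b" where
  "wedge_fold f g z = (if fst z then f (snd z) else g (snd z))"

definition coH_space :: "'a topology \<Rightarrow> 'a \<Rightarrow> ('a \<Rightarrow> bool \<times> 'a) \<Rightarrow> bool" where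
  "coH_space G g0 \<nu> \<longleftrightarrow>
     g0 \<in> topspace G \<and>
     pointed_map G g0 (wedge G g0) (True, g0) \<nu> \<and>
     pointed_homotopic G g0 G g0 (wedge_fold id (\<lambda>_. g0) \<circ> \<nu>) id \<and>
     pointed_homotopic G g0 G g0 (wedge_fold (\<lambda>_. g0) id \<circ> \<nu>) id"

definition coH_sum :: "('a \<Rightarrow> bool \<times> 'a) \<Rightarrow> ('a \<Rightarrow> 'b) \<Rightarrow> ('a \<Rightarrow> 'b) \<Rightarrow> 'a \<Rightarrow> 'b" where
  "coH_sum \<nu> f g = wedge_fold f g \<circ> \<nu>"

end

theory Submission
  imports Defs
begin

lemma topspace_quotient_topology: "topspace (quotient_topology X q) = q ` topspace X"
proof (rule subset_antisym)
  have "openin (quotient_topology X q) (topspace (quotient_topology X q))"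
    by (rule openin_topspace)
  then show "topspace (quotient_topology X q) \<subseteq> q ` topspace X"
    unfolding openin_quotient_topology by (rule conjunct1)
  have e: "{x \<in> topspace X. q x \<in> q ` topspace X} = topspace X" by auto
  have "openin (quotient_topology X q) (q ` topspace X)"
    unfolding openin_quotient_topology e by simp
  then show "q ` topspace X \<subseteq> topspace (quotient_topology X q)"
    by (rule openin_subset)
qed

lemma quotient_map_quotient_topology: "quotient_map X (quotient_topology X q) q"
  unfolding quotient_map_def topspace_quotient_topology openin_quotient_topology
  by simp

abbreviation I01 :: "real topology" where "I01 \<equiv> top_of_set {0..1}"

lemma locI01: "locally_compact_space I01"
  by (rule compact_imp_locally_compact_space, rule compact_space_subtopology) simp

lemma HausI01: "Hausdorff_space I01"
  by (rule Hausdorff_space_subtopology) (rule Hausdorff_space_euclidean)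

lemma quotient_map_susp: "quotient_map (prod_topology A I01) (susp A a0) (\<lambda>(a,t). susp_pt a0 a t)"
  unfolding susp_def by (rule quotient_map_quotient_topology)

lemma topspace_susp: "topspace (susp A a0) = (\<lambda>(a,t). susp_pt a0 a t) ` (topspace A \<times> {0..1})"
  unfolding susp_def topspace_quotient_topology by simp

lemma None_in_susp: "a0 \<in> topspace A \<Longrightarrow> None \<in> topspace (susp A a0)"
  unfolding topspace_susp by (rule image_eqI[of _ _ "(a0,0)"]) (simp_all add: susp_pt_def)

lemma continuous_map_qs: "continuous_map (prod_topology A I01) (susp A a0) (\<lambda>(a,t). susp_pt a0 a t)"
  by (rule quotient_imp_continuous_map[OF quotient_map_susp])
lemma quotient_map_susp_I: "quotient_map (prod_topology I01 (prod_topology A I01)) (prod_topology I01 (susp A a0))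
   (\<lambda>(s,y). (s, (\<lambda>(a,t). susp_pt a0 a t) y))"
  by (rule quotient_map_prod_right[OF locI01 _ quotient_map_susp]) (simp add: HausI01)

lemma cont_susp_from:
  assumes "continuous_map (prod_topology A I01) Y (\<lambda>(a,t). F (susp_pt a0 a t))"
  shows "continuous_map (susp A a0) Y F"
proof (rule continuous_compose_quotient_map[OF quotient_map_susp])
  have "(F \<circ> (\<lambda>(a, t). susp_pt a0 a t)) = (\<lambda>(a,t). F (susp_pt a0 a t))" by (rule ext) auto
  then show "continuous_map (prod_topology A I01) Y (F \<circ> (\<lambda>(a, t). susp_pt a0 a t))"
    using assms by simp
qed

lemma cont_susp_hom_from:
  assumes "continuous_map (prod_topology I01 (prod_topology A I01)) Y (\<lambda>(s,(a,t)). F (s, susp_pt a0 a t))"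
  shows "continuous_map (prod_topology I01 (susp A a0)) Y F"
proof (rule continuous_compose_quotient_map[OF quotient_map_susp_I])
  have "(F \<circ> (\<lambda>(s, y). (s, (\<lambda>(a, t). susp_pt a0 a t) y))) = (\<lambda>(s,(a,t)). F (s, susp_pt a0 a t))" by (rule ext) auto
  then show "continuous_map (prod_topology I01 (prod_topology A I01)) Y (F \<circ> (\<lambda>(s, y). (s, (\<lambda>(a, t). susp_pt a0 a t) y)))"
    using assms by simp
qed

lemma ph_intro:
  assumes "continuous_map (prod_topology I01 X) Y h"
    and "\<And>x. x \<in> topspace X \<Longrightarrow> h (0,x) = f x"
    and "\<And>x. x \<in> topspace X \<Longrightarrow> h (1,x) = g x"
    and "\<And>t. t \<in> {0..1} \<Longrightarrow> h (t,a0) = b0"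
    and "a0 \<in> topspace X"
  shows "pointed_homotopic X a0 Y b0 f g"
proof -
  have "homotopic_with (\<lambda>h. h a0 = b0) X Y f g"
  proof (subst homotopic_with)
    fix h k :: "'a \<Rightarrow> 'b" assume "\<And>x. x \<in> topspace X \<Longrightarrow> h x = k x"
    then show "(h a0 = b0) = (k a0 = b0)" using assms(5) by simp
  next
    show "\<exists>h. continuous_map (prod_topology I01 X) Y h \<and>
        (\<forall>x\<in>topspace X. h (0, x) = f x) \<and> (\<forall>x\<in>topspace X. h (1, x) = g x) \<and> (\<forall>t\<in>{0..1}. h (t, a0) = b0)"
      using assms by blast
  qed
  then show ?thesis unfolding pointed_homotopic_def .
qed

lemma ph_cont: "pointed_homotopic X a0 Y b0 f g \<Longrightarrow> continuous_map X Y f \<and> continuous_map X Y g"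
  unfolding pointed_homotopic_def by (rule homotopic_with_imp_continuous_maps)

lemma ph_trans: "pointed_homotopic X a0 Y b0 f g \<Longrightarrow> pointed_homotopic X a0 Y b0 g h \<Longrightarrow> pointed_homotopic X a0 Y b0 f h"
  unfolding pointed_homotopic_def by (rule homotopic_with_trans)

lemma ph_sym: "pointed_homotopic X a0 Y b0 f g \<Longrightarrow> pointed_homotopic X a0 Y b0 g f"
  unfolding pointed_homotopic_def by (rule homotopic_with_symD)

lemma ph_eq:
  assumes "pointed_homotopic X a0 Y b0 f g" "a0 \<in> topspace X"
    "\<And>x. x \<in> topspace X \<Longrightarrow> f' x = f x" "\<And>x. x \<in> topspace X \<Longrightarrow> g' x = g x"
  shows "pointed_homotopic X a0 Y b0 f' g'"
  using assms(1) unfolding pointed_homotopic_def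
proof (rule homotopic_with_eq)
  show "\<And>x. x \<in> topspace X \<Longrightarrow> f' x = f x" "\<And>x. x \<in> topspace X \<Longrightarrow> g' x = g x" by fact+
  fix h k :: "'a \<Rightarrow> 'b" assume "\<And>x. x \<in> topspace X \<Longrightarrow> h x = k x"
  then show "(h a0 = b0) = (k a0 = b0)" using assms(2) by simp
qed

lemma ph_refl: "continuous_map X Y f \<Longrightarrow> f a0 = b0 \<Longrightarrow> pointed_homotopic X a0 Y b0 f f"
  unfolding pointed_homotopic_def by simp

lemma ph_left: "pointed_homotopic X a0 Y b0 f g \<Longrightarrow> continuous_map Y Z k \<Longrightarrow> k b0 = c0 \<Longrightarrow>
   pointed_homotopic X a0 Z c0 (k \<circ> f) (k \<circ> g)"
  unfolding pointed_homotopic_def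
  by (erule homotopic_with_compose_continuous_map_left) simp_all

lemma ph_right: "pointed_homotopic Y b0 Z c0 f g \<Longrightarrow> continuous_map X Y k \<Longrightarrow> k a0 = b0 \<Longrightarrow>
   pointed_homotopic X a0 Z c0 (f \<circ> k) (g \<circ> k)"
  unfolding pointed_homotopic_def
  by (erule homotopic_with_compose_continuous_map_right) simp_all

section \<open>Suspension of maps\<close>

lemma susp_fun_pt: "f a0 = b0 \<Longrightarrow> susp_fun b0 f (susp_pt a0 a t) = susp_pt b0 (f a) t"
  by (simp add: susp_pt_def susp_fun_def)

lemma susp_fun_None[simp]: "susp_fun b0 f None = None"
  by (simp add: susp_fun_def)

lemma cont_qs_comp:
  assumes "continuous_map Z (prod_topology B I01) k"
  shows "continuous_map Z (susp B b0) (\<lambda>z. susp_pt b0 (fst (k z)) (snd (k z)))"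
proof -
  have "continuous_map Z (susp B b0) ((\<lambda>(a,t). susp_pt b0 a t) \<circ> k)"
    by (rule continuous_map_compose[OF assms continuous_map_qs])
  moreover have "((\<lambda>(a,t). susp_pt b0 a t) \<circ> k) = (\<lambda>z. susp_pt b0 (fst (k z)) (snd (k z)))"
    by (rule ext) (simp add: case_prod_unfold)
  ultimately show ?thesis by simp
qed

lemma cont_susp_fun:
  assumes f: "pointed_map A a0 B b0 f"
  shows "continuous_map (susp A a0) (susp B b0) (susp_fun b0 f)"
proof (rule cont_susp_from)
  have cf: "continuous_map A B f" and f0: "f a0 = b0" using f by (auto simp: pointed_map_def)
  have c1: "continuous_map (prod_topology A I01) B (\<lambda>x. f (fst x))"
    using continuous_map_compose[OF continuous_map_fst cf] by (simp add: o_def)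
  have k: "continuous_map (prod_topology A I01) (prod_topology B I01) (\<lambda>x. (f (fst x), snd x))"
    by (simp add: continuous_map_pairwise o_def c1 continuous_map_snd)
  have "continuous_map (prod_topology A I01) (susp B b0) (\<lambda>x. susp_pt b0 (f (fst x)) (snd x))"
    using cont_qs_comp[OF k] by simp
  moreover have "(\<lambda>x. susp_pt b0 (f (fst x)) (snd x)) = (\<lambda>(a, t). susp_fun b0 f (susp_pt a0 a t))"
    by (rule ext) (simp add: case_prod_unfold susp_fun_pt[of f a0 b0, OF f0])
  ultimately show "continuous_map (prod_topology A I01) (susp B b0) (\<lambda>(a, t). susp_fun b0 f (susp_pt a0 a t))"
    by simp
qed

lemma susp_comp:
  assumes "g h0 = x0"
  shows "susp_fun x0 (g \<circ> f) = susp_fun x0 g \<circ> susp_fun h0 f"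
proof (rule ext)
  fix z show "susp_fun x0 (g \<circ> f) z = (susp_fun x0 g \<circ> susp_fun h0 f) z"
    using assms by (cases z) (auto simp: susp_fun_def susp_pt_def)
qed

lemma cm_fst_snd: "continuous_map (prod_topology X (prod_topology Y Z)) Y (\<lambda>x. fst (snd x))"
  using continuous_map_compose[OF continuous_map_snd continuous_map_fst] by (simp add: o_def)

lemma cm_snd_snd: "continuous_map (prod_topology X (prod_topology Y Z)) Z (\<lambda>x. snd (snd x))"
  using continuous_map_compose[OF continuous_map_snd continuous_map_snd] by (simp add: o_def)

lemma ph_obtain:
  assumes "pointed_homotopic X a0 Y b0 f g"
  obtains h where "continuous_map (prod_topology I01 X) Y h" "\<And>x. h (0,x) = f x" "\<And>x. h (1,x) = g x"
    "\<And>t. t \<in> {0..1} \<Longrightarrow> h (t,a0) = b0"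
  using assms unfolding pointed_homotopic_def homotopic_with_def by auto

lemma susp_hom:
  assumes hfg: "pointed_homotopic A a0 B b0 f g" and a0: "a0 \<in> topspace A"
  shows "pointed_homotopic (susp A a0) None (susp B b0) None (susp_fun b0 f) (susp_fun b0 g)"
proof -
  obtain h where ch: "continuous_map (prod_topology I01 A) B h" and h0: "\<And>x. h (0,x) = f x"
    and h1: "\<And>x. h (1,x) = g x" and hp: "\<And>t. t \<in> {0..1} \<Longrightarrow> h (t,a0) = b0"
    using ph_obtain[OF hfg] by blast
  define H where "H = (\<lambda>(s,z). susp_fun b0 (\<lambda>a. h (s,a)) z)"
  show ?thesis
  proof (rule ph_intro[where h=H])
    have c1: "continuous_map (prod_topology I01 (prod_topology A I01)) B (\<lambda>x. h (fst x, fst (snd x)))"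
    proof -
      have "continuous_map (prod_topology I01 (prod_topology A I01)) (prod_topology I01 A) (\<lambda>x. (fst x, fst (snd x)))"
        by (simp add: continuous_map_pairwise o_def continuous_map_fst cm_fst_snd)
      from continuous_map_compose[OF this ch] show ?thesis by (simp add: o_def)
    qed
    have k: "continuous_map (prod_topology I01 (prod_topology A I01)) (prod_topology B I01) (\<lambda>x. (h (fst x, fst (snd x)), snd (snd x)))"
      by (simp add: continuous_map_pairwise o_def c1 cm_snd_snd)
    have "continuous_map (prod_topology I01 (prod_topology A I01)) (susp B b0) (\<lambda>x. susp_pt b0 (h (fst x, fst (snd x))) (snd (snd x)))"
      using cont_qs_comp[OF k] by simp
    then have "continuous_map (prod_topology I01 (prod_topology A I01)) (susp B b0) (\<lambda>(s,(a,t)). H (s, susp_pt a0 a t))"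
    proof (rule continuous_map_eq)
      fix x assume "x \<in> topspace (prod_topology I01 (prod_topology A I01))"
      then have "fst x \<in> {0..1}" by auto
      then show "susp_pt b0 (h (fst x, fst (snd x))) (snd (snd x)) = (\<lambda>(s,(a,t)). H (s, susp_pt a0 a t)) x"
        unfolding H_def using susp_fun_pt[of "\<lambda>a. h (fst x, a)" a0 b0] hp by (simp add: case_prod_unfold)
    qed
    then show "continuous_map (prod_topology I01 (susp A a0)) (susp B b0) H"
      by (rule cont_susp_hom_from)
    show "H (0, x) = susp_fun b0 f x" for x unfolding H_def using h0 by simp
    show "H (1, x) = susp_fun b0 g x" for x unfolding H_def using h1 by simp
    show "H (t, None) = None" for t unfolding H_def by simp
    show "None \<in> topspace (susp A a0)" by (rule None_in_susp[OF a0])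
  qed
qed

lemma part1:
  assumes f: "pointed_map G g0 H h0 f" and f': "pointed_map G g0 H h0 f'"
    and g: "pointed_map H h0 X x0 g" and g': "pointed_map H h0 X x0 g'"
    and ff: "congruent_maps G g0 H h0 f f'" and gg: "congruent_maps H h0 X x0 g g'"
  shows "congruent_maps G g0 X x0 (g \<circ> f) (g' \<circ> f')"
proof -
  have g0: "g h0 = x0" and g0': "g' h0 = x0" using g g' by (auto simp: pointed_map_def)
  have "pointed_homotopic (susp G g0) None (susp X x0) None (susp_fun x0 g \<circ> susp_fun h0 f) (susp_fun x0 g \<circ> susp_fun h0 f')"
    using ff unfolding congruent_maps_def
    by (rule ph_left) (simp_all add: cont_susp_fun[OF g])
  moreover have "pointed_homotopic (susp G g0) None (susp X x0) None (susp_fun x0 g \<circ> susp_fun h0 f') (susp_fun x0 g' \<circ> susp_fun h0 f')"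
    using gg unfolding congruent_maps_def
    by (rule ph_right) (simp_all add: cont_susp_fun[OF f'])
  ultimately show ?thesis
    unfolding congruent_maps_def susp_comp[of g h0 x0, OF g0] susp_comp[of g' h0 x0, OF g0']
    by (rule ph_trans)
qed

lemma cont_into_susp:
  assumes x: "continuous_map Z A x"
    and r: "continuous_map Z euclideanreal r" "\<And>z. z \<in> topspace Z \<Longrightarrow> r z \<in> {0..1}"
  shows "continuous_map Z (susp A a0) (\<lambda>z. susp_pt a0 (x z) (r z))"
proof -
  have "continuous_map Z I01 r" using r by (auto simp: continuous_map_in_subtopology)
  then have "continuous_map Z (prod_topology A I01) (\<lambda>z. (x z, r z))"
    by (simp add: continuous_map_pairwise o_def x)
  from cont_qs_comp[OF this] show ?thesis by simp
qed

lemma cont_reparam_h: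
  assumes U: "continuous_map (prod_topology I01 (susp A a0)) Y U"
    and s: "continuous_map Z euclideanreal s" "\<And>z. z \<in> topspace Z \<Longrightarrow> s z \<in> {0..1}"
    and x: "continuous_map Z A x"
    and r: "continuous_map Z euclideanreal r" "\<And>z. z \<in> topspace Z \<Longrightarrow> r z \<in> {0..1}"
  shows "continuous_map Z Y (\<lambda>z. U (s z, susp_pt a0 (x z) (r z)))"
proof -
  have "continuous_map Z I01 s" using s by (auto simp: continuous_map_in_subtopology)
  then have "continuous_map Z (prod_topology I01 (susp A a0)) (\<lambda>z. (s z, susp_pt a0 (x z) (r z)))"
    by (simp add: continuous_map_pairwise o_def cont_into_susp[OF x r])
  from continuous_map_compose[OF this U] show ?thesis by (simp add: o_def)
qed

lemma cont_reparam:
  assumes U: "continuous_map (susp A a0) Y u"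
    and x: "continuous_map Z A x"
    and r: "continuous_map Z euclideanreal r" "\<And>z. z \<in> topspace Z \<Longrightarrow> r z \<in> {0..1}"
  shows "continuous_map Z Y (\<lambda>z. u (susp_pt a0 (x z) (r z)))"
  using continuous_map_compose[OF cont_into_susp[OF x r] U] by (simp add: o_def)

lemma topspace_susp_cases:
  assumes "z \<in> topspace (susp A a0)"
  obtains x t where "x \<in> topspace A" "t \<in> {0..1}" "z = susp_pt a0 x t"
  using assms unfolding topspace_susp by auto

definition psum :: "'a \<Rightarrow> (('a \<times> real) option \<Rightarrow> 'y option) \<Rightarrow> (('a \<times> real) option \<Rightarrow> 'y option) \<Rightarrow> ('a \<times> real) option \<Rightarrow> 'y option" where
  "psum a0 u v z = (case z of None \<Rightarrow> None | Some (x,t) \<Rightarrow>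
      if t \<le> 1/2 then u (susp_pt a0 x (2*t)) else v (susp_pt a0 x (2*t-1)))"

lemma psum_None[simp]: "psum a0 u v None = None"
  by (simp add: psum_def)

lemma psum_pt:
  assumes "u None = None" "v None = None"
  shows "psum a0 u v (susp_pt a0 x t) = (if t \<le> 1/2 then u (susp_pt a0 x (2*t)) else v (susp_pt a0 x (2*t-1)))"
  using assms by (auto simp: psum_def susp_pt_def)

lemma cm_I01_real: "continuous_map X I01 f \<Longrightarrow> continuous_map X euclideanreal f"
  by (simp add: continuous_map_in_subtopology)

lemma cmT_s: "continuous_map (prod_topology I01 (prod_topology A I01)) euclideanreal fst"
  using continuous_map_fst[of I01 "prod_topology A I01"] by (simp add: continuous_map_in_subtopology)

lemma cmT_t: "continuous_map (prod_topology I01 (prod_topology A I01)) euclideanreal (\<lambda>w. snd (snd w))"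
  using cm_snd_snd[of I01 A I01] by (simp add: continuous_map_in_subtopology)

lemma cmT_x: "continuous_map (prod_topology I01 (prod_topology A I01)) A (\<lambda>w. fst (snd w))"
  by (rule cm_fst_snd)

lemma psum_hom:
  assumes hu: "pointed_homotopic (susp A a0) None Y None u u'"
    and hv: "pointed_homotopic (susp A a0) None Y None v v'"
    and a0: "a0 \<in> topspace A"
  shows "pointed_homotopic (susp A a0) None Y None (psum a0 u v) (psum a0 u' v')"
proof -
  obtain U where cU: "continuous_map (prod_topology I01 (susp A a0)) Y U" and U0: "\<And>x. U (0,x) = u x"
    and U1: "\<And>x. U (1,x) = u' x" and Up: "\<And>t. t \<in> {0..1} \<Longrightarrow> U (t,None) = None"
    using ph_obtain[OF hu] by blast
  obtain V where cV: "continuous_map (prod_topology I01 (susp A a0)) Y V" and V0: "\<And>x. V (0,x) = v x"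
    and V1: "\<And>x. V (1,x) = v' x" and Vp: "\<And>t. t \<in> {0..1} \<Longrightarrow> V (t,None) = None"
    using ph_obtain[OF hv] by blast
  define W where "W = (\<lambda>(s,z). psum a0 (\<lambda>z. U (s,z)) (\<lambda>z. V (s,z)) z)"
  let ?T = "prod_topology I01 (prod_topology A I01)"
  show ?thesis
  proof (rule ph_intro[where h=W])
    have "continuous_map ?T Y (\<lambda>w. if snd (snd w) \<le> 1/2 then U (fst w, susp_pt a0 (fst (snd w)) (2 * snd (snd w)))
                      else V (fst w, susp_pt a0 (fst (snd w)) (2 * snd (snd w) - 1)))"
    proof (rule continuous_map_cases_le)
      show "continuous_map ?T euclideanreal (\<lambda>w. snd (snd w))" by (rule cmT_t)
      show "continuous_map ?T euclideanreal (\<lambda>w. 1/2)" by simp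
      show "continuous_map (subtopology ?T {w \<in> topspace ?T. snd (snd w) \<le> 1 / 2}) Y
             (\<lambda>w. U (fst w, susp_pt a0 (fst (snd w)) (2 * snd (snd w))))"
      proof (rule cont_reparam_h[OF cU])
        show "continuous_map (subtopology ?T {w \<in> topspace ?T. snd (snd w) \<le> 1 / 2}) euclideanreal fst"
          by (rule continuous_map_from_subtopology[OF cmT_s])
        show "continuous_map (subtopology ?T {w \<in> topspace ?T. snd (snd w) \<le> 1 / 2}) A (\<lambda>w. fst (snd w))"
          by (rule continuous_map_from_subtopology[OF cmT_x])
        show "continuous_map (subtopology ?T {w \<in> topspace ?T. snd (snd w) \<le> 1 / 2}) euclideanreal (\<lambda>w. 2 * snd (snd w))"
          by (intro continuous_intros continuous_map_from_subtopology[OF cmT_t])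
      qed auto
      show "continuous_map (subtopology ?T {w \<in> topspace ?T. 1/2 \<le> snd (snd w)}) Y
             (\<lambda>w. V (fst w, susp_pt a0 (fst (snd w)) (2 * snd (snd w) - 1)))"
      proof (rule cont_reparam_h[OF cV])
        show "continuous_map (subtopology ?T {w \<in> topspace ?T. 1/2 \<le> snd (snd w)}) euclideanreal fst"
          by (rule continuous_map_from_subtopology[OF cmT_s])
        show "continuous_map (subtopology ?T {w \<in> topspace ?T. 1/2 \<le> snd (snd w)}) A (\<lambda>w. fst (snd w))"
          by (rule continuous_map_from_subtopology[OF cmT_x])
        show "continuous_map (subtopology ?T {w \<in> topspace ?T. 1/2 \<le> snd (snd w)}) euclideanreal (\<lambda>w. 2 * snd (snd w) - 1)"
          by (intro continuous_intros continuous_map_from_subtopology[OF cmT_t])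
      qed auto
      fix w assume "w \<in> topspace ?T" "snd (snd w) = 1/2"
      then show "U (fst w, susp_pt a0 (fst (snd w)) (2 * snd (snd w))) = V (fst w, susp_pt a0 (fst (snd w)) (2 * snd (snd w) - 1))"
        using Up Vp by (auto simp: susp_pt_def)
    qed
    then have "continuous_map ?T Y (\<lambda>(s,(a,t)). W (s, susp_pt a0 a t))"
    proof (rule continuous_map_eq)
      fix w assume "w \<in> topspace ?T"
      then have "fst w \<in> {0..1}" by auto
      then show "(if snd (snd w) \<le> 1/2 then U (fst w, susp_pt a0 (fst (snd w)) (2 * snd (snd w)))
                      else V (fst w, susp_pt a0 (fst (snd w)) (2 * snd (snd w) - 1))) = (\<lambda>(s,(a,t)). W (s, susp_pt a0 a t)) w"
        unfolding W_def using Up Vp psum_pt[of "\<lambda>z. U (fst w, z)" "\<lambda>z. V (fst w, z)" a0] by (simp add: case_prod_unfold)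
    qed
    then show "continuous_map (prod_topology I01 (susp A a0)) Y W"
      by (rule cont_susp_hom_from)
    show "W (0, x) = psum a0 u v x" for x unfolding W_def using U0 V0 by simp
    show "W (1, x) = psum a0 u' v' x" for x unfolding W_def using U1 V1 by simp
    show "W (t, None) = None" for t unfolding W_def by simp
    show "None \<in> topspace (susp A a0)" by (rule None_in_susp[OF a0])
  qed
qed

lemma reparam_hom:
  assumes cu: "continuous_map (susp A a0) Y u" and u0: "u None = None" and a0: "a0 \<in> topspace A"
    and cR: "continuous_map (prod_topology I01 (prod_topology A I01)) euclideanreal (\<lambda>w. R (fst w) (snd (snd w)))"
    and Rr: "\<And>s t. s \<in> {0..1} \<Longrightarrow> t \<in> {0..1} \<Longrightarrow> R s t \<in> {0..1}"
    and R0: "\<And>s. s \<in> {0..1} \<Longrightarrow> R s 0 = 0" and R1: "\<And>s. s \<in> {0..1} \<Longrightarrow> R s 1 = 1"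
    and f: "\<And>x t. x \<in> topspace A \<Longrightarrow> t \<in> {0..1} \<Longrightarrow> f (susp_pt a0 x t) = u (susp_pt a0 x (R 0 t))"
    and g: "\<And>x t. x \<in> topspace A \<Longrightarrow> t \<in> {0..1} \<Longrightarrow> g (susp_pt a0 x t) = u (susp_pt a0 x (R 1 t))"
  shows "pointed_homotopic (susp A a0) None Y None f g"
proof -
  define W where "W = (\<lambda>(s,z). case z of None \<Rightarrow> None | Some (x,t) \<Rightarrow> u (susp_pt a0 x (R s t)))"
  have Wpt: "W (s, susp_pt a0 x t) = u (susp_pt a0 x (R s t))" if "s \<in> {0..1}" for s x t
    unfolding W_def using u0 R0[OF that] R1[OF that] by (auto simp: susp_pt_def)
  let ?T = "prod_topology I01 (prod_topology A I01)"
  show ?thesis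
  proof (rule ph_intro[where h=W])
    have "continuous_map ?T Y (\<lambda>w. u (susp_pt a0 (fst (snd w)) (R (fst w) (snd (snd w)))))"
    proof (rule cont_reparam[OF cu cmT_x cR])
      fix w assume "w \<in> topspace ?T"
      then show "R (fst w) (snd (snd w)) \<in> {0..1}" using Rr by auto
    qed
    then have "continuous_map ?T Y (\<lambda>(s,(a,t)). W (s, susp_pt a0 a t))"
    proof (rule continuous_map_eq)
      fix w assume "w \<in> topspace ?T"
      then have "fst w \<in> {0..1}" by auto
      then show "u (susp_pt a0 (fst (snd w)) (R (fst w) (snd (snd w)))) = (\<lambda>(s,(a,t)). W (s, susp_pt a0 a t)) w"
        using Wpt by (simp add: case_prod_unfold)
    qed
    then show "continuous_map (prod_topology I01 (susp A a0)) Y W"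
      by (rule cont_susp_hom_from)
    fix z assume "z \<in> topspace (susp A a0)"
    then obtain x t where xt: "x \<in> topspace A" "t \<in> {0..1}" "z = susp_pt a0 x t"
      by (rule topspace_susp_cases)
    show "W (0, z) = f z" using xt Wpt[of 0] f by simp
    show "W (1, z) = g z" using xt Wpt[of 1] g by simp
  next
    show "W (t, None) = None" for t unfolding W_def by simp
    show "None \<in> topspace (susp A a0)" by (rule None_in_susp[OF a0])
  qed
qed

lemma psum_zero_right:
  assumes cu: "continuous_map (susp A a0) Y u" and u0: "u None = None" and a0: "a0 \<in> topspace A"
  shows "pointed_homotopic (susp A a0) None Y None (psum a0 u (\<lambda>_. None)) u"
proof (rule reparam_hom[OF cu u0 a0, where R="\<lambda>s t. min 1 ((2-s)*t)"])
  show "continuous_map (prod_topology I01 (prod_topology A I01)) euclideanreal (\<lambda>w. min 1 ((2 - fst w) * snd (snd w)))"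
    by (intro continuous_intros cmT_s cmT_t)
  show "min 1 ((2 - s) * t) \<in> {0..1}" if "s \<in> {0..1}" "t \<in> {0..1}" for s t :: real
    using that by auto
  fix x t assume "x \<in> topspace A" "t \<in> {0..(1::real)}"
  show "psum a0 u (\<lambda>_. None) (susp_pt a0 x t) = u (susp_pt a0 x (min 1 ((2 - 0) * t)))"
  proof (cases "t \<le> 1/2")
    case True then show ?thesis using u0 by (simp add: psum_pt)
  next
    case False
    have "psum a0 u (\<lambda>_. None) (susp_pt a0 x t) = None" using psum_pt[of u "\<lambda>_. None" a0 x t] u0 False by simp
    moreover have "min 1 ((2 - 0) * t) = 1" using False by simp
    ultimately show ?thesis using u0 by (simp add: susp_pt_def)
  qed
  show "u (susp_pt a0 x t) = u (susp_pt a0 x (min 1 ((2 - 1) * t)))"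
    using \<open>t \<in> {0..1}\<close> by simp
qed auto

lemma psum_zero_left:
  assumes cu: "continuous_map (susp A a0) Y u" and u0: "u None = None" and a0: "a0 \<in> topspace A"
  shows "pointed_homotopic (susp A a0) None Y None (psum a0 (\<lambda>_. None) u) u"
proof (rule reparam_hom[OF cu u0 a0, where R="\<lambda>s t. max 0 ((2-s)*t - (1-s))"])
  show "continuous_map (prod_topology I01 (prod_topology A I01)) euclideanreal (\<lambda>w. max 0 ((2 - fst w) * snd (snd w) - (1 - fst w)))"
    by (intro continuous_intros cmT_s cmT_t)
  show "max 0 ((2 - s) * t - (1 - s)) \<in> {0..1}" if "s \<in> {0..1}" "t \<in> {0..1}" for s t :: real
  proof -
    have "(2 - s) * t \<le> (2 - s) * 1" using that by (intro mult_left_mono) auto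
    then have h1: "(2 - s) * t \<le> 2 - s" by simp
    define p where "p = (2 - s) * t"
    have "p \<le> 2 - s" using h1 p_def by simp
    then have "max 0 (p - (1 - s)) \<in> {0..1}" by (auto simp: max_def)
    then show ?thesis unfolding p_def .
  qed
  fix x t assume "x \<in> topspace A" "t \<in> {0..(1::real)}"
  show "psum a0 (\<lambda>_. None) u (susp_pt a0 x t) = u (susp_pt a0 x (max 0 ((2 - 0) * t - (1 - 0))))"
  proof (cases "t \<le> 1/2")
    case True
    have "psum a0 (\<lambda>_. None) u (susp_pt a0 x t) = None" using psum_pt[of "\<lambda>_. None" u a0 x t] u0 True by simp
    moreover have "max 0 ((2 - 0) * t - (1 - 0)) = 0" using True by simp
    ultimately show ?thesis using u0 by (simp add: susp_pt_def)
  next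
    case False then show ?thesis using u0 by (simp add: psum_pt)
  qed
  show "u (susp_pt a0 x t) = u (susp_pt a0 x (max 0 ((2 - 1) * t - (1 - 1))))"
    using \<open>t \<in> {0..1}\<close> by simp
qed auto

section \<open>Clopen case split and the wedge\<close>

lemma cont_if_clopen:
  assumes f: "continuous_map X Y f" and g: "continuous_map X Y g"
    and o1: "openin X {x \<in> topspace X. P x}" and o2: "openin X {x \<in> topspace X. \<not> P x}"
  shows "continuous_map X Y (\<lambda>x. if P x then f x else g x)"
proof (rule continuous_map_cases_alt)
  have e1: "topspace X - {x \<in> topspace X. P x} = {x \<in> topspace X. \<not> P x}" by blast
  have e2: "topspace X - {x \<in> topspace X. \<not> P x} = {x \<in> topspace X. P x}" by blast
  have c1: "closedin X {x \<in> topspace X. P x}" unfolding closedin_def e1 using o2 by simp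
  have c2: "closedin X {x \<in> topspace X. \<not> P x}" unfolding closedin_def e2 using o1 by simp
  show "continuous_map (subtopology X (X closure_of {x \<in> topspace X. P x})) Y f"
    by (rule continuous_map_from_subtopology[OF f])
  show "continuous_map (subtopology X (X closure_of {x \<in> topspace X. \<not> P x})) Y g"
    by (rule continuous_map_from_subtopology[OF g])
  fix x assume "x \<in> X frontier_of {x \<in> topspace X. P x}"
  then have False
    unfolding frontier_of_def closure_of_closedin[OF c1] interior_of_openin[OF o1] by simp
  then show "f x = g x" ..
qed

lemma cont_sum_snd: "continuous_map (sum_topology (\<lambda>_. G) UNIV) G snd"
  unfolding continuous_map_def
proof (intro conjI allI impI)
  show "snd \<in> topspace (sum_topology (\<lambda>_. G) UNIV) \<rightarrow> topspace G" by auto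
  fix U assume U: "openin G U"
  have e: "{x \<in> topspace (sum_topology (\<lambda>_. G) UNIV). snd x \<in> U} = Sigma UNIV (\<lambda>_. U)"
    using openin_subset[OF U] by auto
  show "openin (sum_topology (\<lambda>_. G) UNIV) {x \<in> topspace (sum_topology (\<lambda>_. G) UNIV). snd x \<in> U}"
    unfolding e openin_disjoint_union using U by simp
qed

lemma openin_sum_fst:
  "openin (sum_topology (\<lambda>_. G) UNIV) {x \<in> topspace (sum_topology (\<lambda>_. G) UNIV). fst x = b}"
proof -
  have e: "{x \<in> topspace (sum_topology (\<lambda>_. G) UNIV). fst x = b} = Sigma UNIV (\<lambda>i. if i = b then topspace G else {})"
    by (auto split: if_splits)
  show ?thesis unfolding e openin_disjoint_union by simp
qed

lemma quotient_map_wedge: "quotient_map (sum_topology (\<lambda>_. G) UNIV) (wedge G g0) (wedge_pt g0)"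
  unfolding wedge_def by (rule quotient_map_quotient_topology)

lemma locII: "locally_compact_space (prod_topology I01 I01)"
  by (metis locally_compact_space_prod_topology locI01)

lemma HausII: "Hausdorff_space (prod_topology I01 I01)"
  by (metis Hausdorff_space_prod_topology HausI01)

definition sfold :: "'a \<Rightarrow> ('a \<Rightarrow> bool \<times> 'a) \<Rightarrow> (('a \<times> real) option \<Rightarrow> 'y option) \<Rightarrow> (('a \<times> real) option \<Rightarrow> 'y option) \<Rightarrow> ('a \<times> real) option \<Rightarrow> 'y option" where
  "sfold g0 \<nu> U V z = (case z of None \<Rightarrow> None | Some (x,t) \<Rightarrow>
     if fst (\<nu> x) then U (susp_pt g0 (snd (\<nu> x)) t) else V (susp_pt g0 (snd (\<nu> x)) t))"

lemma sfold_None[simp]: "sfold g0 \<nu> U V None = None"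
  by (simp add: sfold_def)

lemma sfold_pt:
  assumes "U None = None" "V None = None" "\<nu> g0 = (True, g0)"
  shows "sfold g0 \<nu> U V (susp_pt g0 x t) = (if fst (\<nu> x) then U (susp_pt g0 (snd (\<nu> x)) t) else V (susp_pt g0 (snd (\<nu> x)) t))"
  using assms by (auto simp: sfold_def susp_pt_def)

lemma fold_hom:
  assumes \<nu>: "pointed_map G g0 (wedge G g0) (True, g0) \<nu>" and g0: "g0 \<in> topspace G"
    and hu: "pointed_homotopic (susp G g0) None Y None u u'"
    and hv: "pointed_homotopic (susp G g0) None Y None v v'"
  shows "pointed_homotopic (susp G g0) None Y None (sfold g0 \<nu> u v) (sfold g0 \<nu> u' v')"
proof -
  have c\<nu>: "continuous_map G (wedge G g0) \<nu>" and \<nu>0: "\<nu> g0 = (True, g0)" using \<nu> by (auto simp: pointed_map_def)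
  obtain U where cU: "continuous_map (prod_topology I01 (susp G g0)) Y U" and U0: "\<And>x. U (0,x) = u x"
    and U1: "\<And>x. U (1,x) = u' x" and Up: "\<And>t. t \<in> {0..1} \<Longrightarrow> U (t,None) = None"
    using ph_obtain[OF hu] by blast
  obtain V where cV: "continuous_map (prod_topology I01 (susp G g0)) Y V" and V0: "\<And>x. V (0,x) = v x"
    and V1: "\<And>x. V (1,x) = v' x" and Vp: "\<And>t. t \<in> {0..1} \<Longrightarrow> V (t,None) = None"
    using ph_obtain[OF hv] by blast
  define \<Psi> where "\<Psi> = (\<lambda>w::(real \<times> real) \<times> bool \<times> 'a. if fst (snd w) then U (fst (fst w), susp_pt g0 (snd (snd w)) (snd (fst w)))
      else V (fst (fst w), susp_pt g0 (snd (snd w)) (snd (fst w))))"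
  let ?S = "prod_topology (prod_topology I01 I01) (sum_topology (\<lambda>_. G) (UNIV::bool set))"
  have s1: "continuous_map ?S euclideanreal (\<lambda>w. fst (fst w))"
    using cm_I01_real[OF continuous_map_compose[OF continuous_map_fst continuous_map_fst, of I01 I01 "sum_topology (\<lambda>_. G) UNIV"]]
    by (simp add: o_def)
  have r1: "continuous_map ?S euclideanreal (\<lambda>w. snd (fst w))"
    using cm_I01_real[OF continuous_map_compose[OF continuous_map_fst continuous_map_snd, of I01 I01 "sum_topology (\<lambda>_. G) UNIV"]]
    by (simp add: o_def)
  have x1: "continuous_map ?S G (\<lambda>w. snd (snd w))"
    using continuous_map_compose[OF continuous_map_snd cont_sum_snd, of "prod_topology I01 I01"]
    by (simp add: o_def)
  have cK: "continuous_map ?S Y \<Psi>"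
    unfolding \<Psi>_def
  proof (rule cont_if_clopen)
    show "continuous_map ?S Y (\<lambda>w. U (fst (fst w), susp_pt g0 (snd (snd w)) (snd (fst w))))"
      by (rule cont_reparam_h[OF cU s1 _ x1 r1]) auto
    show "continuous_map ?S Y (\<lambda>w. V (fst (fst w), susp_pt g0 (snd (snd w)) (snd (fst w))))"
      by (rule cont_reparam_h[OF cV s1 _ x1 r1]) auto
    have "openin ?S {w \<in> topspace ?S. snd w \<in> {y \<in> topspace (sum_topology (\<lambda>_. G) UNIV). fst y = True}}"
      by (rule openin_continuous_map_preimage[OF continuous_map_snd openin_sum_fst])
    moreover have "{w \<in> topspace ?S. snd w \<in> {y \<in> topspace (sum_topology (\<lambda>_. G) UNIV). fst y = True}} = {w \<in> topspace ?S. fst (snd w)}"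
      by auto
    ultimately show "openin ?S {w \<in> topspace ?S. fst (snd w)}" by simp
    have "openin ?S {w \<in> topspace ?S. snd w \<in> {y \<in> topspace (sum_topology (\<lambda>_. G) UNIV). fst y = False}}"
      by (rule openin_continuous_map_preimage[OF continuous_map_snd openin_sum_fst])
    moreover have "{w \<in> topspace ?S. snd w \<in> {y \<in> topspace (sum_topology (\<lambda>_. G) UNIV). fst y = False}} = {w \<in> topspace ?S. \<not> fst (snd w)}"
      by auto
    ultimately show "openin ?S {w \<in> topspace ?S. \<not> fst (snd w)}" by simp
  qed
  have qW: "quotient_map ?S (prod_topology (prod_topology I01 I01) (wedge G g0)) (\<lambda>(x,y). (x, wedge_pt g0 y))"
    by (rule quotient_map_prod_right[OF locII _ quotient_map_wedge]) (rule disjI1, rule HausII)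
  have cPsi: "continuous_map (prod_topology (prod_topology I01 I01) (wedge G g0)) Y \<Psi>"
  proof (rule continuous_compose_quotient_map[OF qW])
    show "continuous_map ?S Y (\<Psi> \<circ> (\<lambda>(x, y). (x, wedge_pt g0 y)))"
      using cK
    proof (rule continuous_map_eq)
      fix w assume w: "w \<in> topspace ?S"
      then have "fst (fst w) \<in> {0..1}" by auto
      then show "\<Psi> w = (\<Psi> \<circ> (\<lambda>(x, y). (x, wedge_pt g0 y))) w"
        unfolding \<Psi>_def using Up Vp by (auto simp: wedge_pt_def case_prod_unfold susp_pt_def)
    qed
  qed
  let ?T = "prod_topology I01 (prod_topology G I01)"
  have m: "continuous_map ?T (prod_topology (prod_topology I01 I01) (wedge G g0)) (\<lambda>w. ((fst w, snd (snd w)), \<nu> (fst (snd w))))"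
  proof -
    have a: "continuous_map ?T (prod_topology I01 I01) (\<lambda>w. (fst w, snd (snd w)))"
      by (intro continuous_map_pairedI continuous_map_fst cm_snd_snd)
    have b: "continuous_map ?T (wedge G g0) (\<lambda>w. \<nu> (fst (snd w)))"
      using continuous_map_compose[OF cmT_x c\<nu>] by (simp add: o_def)
    show ?thesis using a b by (rule continuous_map_pairedI)
  qed
  define W where "W = (\<lambda>(s,z). sfold g0 \<nu> (\<lambda>z. U (s,z)) (\<lambda>z. V (s,z)) z)"
  show ?thesis
  proof (rule ph_intro[where h=W])
    have "continuous_map ?T Y (\<Psi> \<circ> (\<lambda>w. ((fst w, snd (snd w)), \<nu> (fst (snd w)))))"
      by (rule continuous_map_compose[OF m cPsi])
    then have "continuous_map ?T Y (\<lambda>(s,(a,t)). W (s, susp_pt g0 a t))"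
    proof (rule continuous_map_eq)
      fix w assume "w \<in> topspace ?T"
      then have "fst w \<in> {0..1}" by auto
      then show "(\<Psi> \<circ> (\<lambda>w. ((fst w, snd (snd w)), \<nu> (fst (snd w))))) w = (\<lambda>(s,(a,t)). W (s, susp_pt g0 a t)) w"
        unfolding W_def \<Psi>_def using Up Vp sfold_pt[of "\<lambda>z. U (fst w, z)" "\<lambda>z. V (fst w, z)" \<nu> g0, OF _ _ \<nu>0]
        by (simp add: case_prod_unfold)
    qed
    then show "continuous_map (prod_topology I01 (susp G g0)) Y W"
      by (rule cont_susp_hom_from)
    show "W (0, x) = sfold g0 \<nu> u v x" for x unfolding W_def using U0 V0 by simp
    show "W (1, x) = sfold g0 \<nu> u' v' x" for x unfolding W_def using U1 V1 by simp
    show "W (t, None) = None" for t unfolding W_def by simp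
    show "None \<in> topspace (susp G g0)" by (rule None_in_susp[OF g0])
  qed
qed

section \<open>Eckmann--Hilton\<close>

lemma susp_pt_base[simp]: "susp_pt x0 x0 t = None"
  by (simp add: susp_pt_def)

lemma coH_sum_susp:
  assumes co: "coH_space G g0 \<nu>" and a: "pointed_map G g0 X x0 a" and b: "pointed_map G g0 X x0 b"
  shows "pointed_homotopic (susp G g0) None (susp X x0) None (susp_fun x0 (coH_sum \<nu> a b))
           (psum g0 (susp_fun x0 a) (susp_fun x0 b))"
proof -
  have g0: "g0 \<in> topspace G" and \<nu>: "pointed_map G g0 (wedge G g0) (True, g0) \<nu>"
    and h1: "pointed_homotopic G g0 G g0 (wedge_fold id (\<lambda>_. g0) \<circ> \<nu>) id"
    and h2: "pointed_homotopic G g0 G g0 (wedge_fold (\<lambda>_. g0) id \<circ> \<nu>) id"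
    using co by (auto simp: coH_space_def)
  have \<nu>0: "\<nu> g0 = (True, g0)" using \<nu> by (simp add: pointed_map_def)
  have ca: "continuous_map G X a" and a0: "a g0 = x0" using a by (auto simp: pointed_map_def)
  have cb: "continuous_map G X b" and b0: "b g0 = x0" using b by (auto simp: pointed_map_def)
  have N: "None \<in> topspace (susp G g0)" by (rule None_in_susp[OF g0])
  let ?Sa = "susp_fun x0 a" and ?Sb = "susp_fun x0 b"
  have cSa: "continuous_map (susp G g0) (susp X x0) ?Sa" by (rule cont_susp_fun[OF a])
  have cSb: "continuous_map (susp G g0) (susp X x0) ?Sb" by (rule cont_susp_fun[OF b])
  have ea: "coH_sum \<nu> a (\<lambda>_. x0) = a \<circ> (wedge_fold id (\<lambda>_. g0) \<circ> \<nu>)"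
    by (rule ext) (simp add: coH_sum_def wedge_fold_def a0)
  have eb: "coH_sum \<nu> (\<lambda>_. x0) b = b \<circ> (wedge_fold (\<lambda>_. g0) id \<circ> \<nu>)"
    by (rule ext) (simp add: coH_sum_def wedge_fold_def b0)
  have ua: "pointed_homotopic (susp G g0) None (susp X x0) None (susp_fun x0 (coH_sum \<nu> a (\<lambda>_. x0))) ?Sa"
  proof -
    have "pointed_homotopic G g0 X x0 (a \<circ> (wedge_fold id (\<lambda>_. g0) \<circ> \<nu>)) (a \<circ> id)"
      by (rule ph_left[OF h1 ca a0])
    from susp_hom[OF this g0] show ?thesis unfolding ea by simp
  qed
  have ub: "pointed_homotopic (susp G g0) None (susp X x0) None (susp_fun x0 (coH_sum \<nu> (\<lambda>_. x0) b)) ?Sb"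
  proof -
    have "pointed_homotopic G g0 X x0 (b \<circ> (wedge_fold (\<lambda>_. g0) id \<circ> \<nu>)) (b \<circ> id)"
      by (rule ph_left[OF h2 cb b0])
    from susp_hom[OF this g0] show ?thesis unfolding eb by simp
  qed
  have s1: "pointed_homotopic (susp G g0) None (susp X x0) None (sfold g0 \<nu> ?Sa ?Sb)
              (sfold g0 \<nu> (psum g0 ?Sa (\<lambda>_. None)) (psum g0 (\<lambda>_. None) ?Sb))"
    by (rule fold_hom[OF \<nu> g0 ph_sym[OF psum_zero_right[OF cSa _ g0]] ph_sym[OF psum_zero_left[OF cSb _ g0]]]) simp_all
  have s2: "pointed_homotopic (susp G g0) None (susp X x0) None
              (psum g0 (susp_fun x0 (coH_sum \<nu> a (\<lambda>_. x0))) (susp_fun x0 (coH_sum \<nu> (\<lambda>_. x0) b))) (psum g0 ?Sa ?Sb)"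
    by (rule psum_hom[OF ua ub g0])
  have e1: "susp_fun x0 (coH_sum \<nu> a b) z = sfold g0 \<nu> ?Sa ?Sb z" if zt: "z \<in> topspace (susp G g0)" for z
  proof -
    obtain x t where "x \<in> topspace G" "t \<in> {0..1}" and xt: "z = susp_pt g0 x t" by (rule topspace_susp_cases[OF zt])
    have cs0: "coH_sum \<nu> a b g0 = x0" by (simp add: coH_sum_def wedge_fold_def \<nu>0 a0)
    show ?thesis unfolding xt
      apply (simp only: susp_fun_pt[of "coH_sum \<nu> a b" g0 x0, OF cs0])
      by (simp add: sfold_pt \<nu>0 susp_fun_pt[of a g0 x0, OF a0]
          susp_fun_pt[of b g0 x0, OF b0] coH_sum_def wedge_fold_def)
  qed
  have e2: "psum g0 (susp_fun x0 (coH_sum \<nu> a (\<lambda>_. x0))) (susp_fun x0 (coH_sum \<nu> (\<lambda>_. x0) b)) z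
       = sfold g0 \<nu> (psum g0 ?Sa (\<lambda>_. None)) (psum g0 (\<lambda>_. None) ?Sb) z" if zt: "z \<in> topspace (susp G g0)" for z
  proof -
    obtain x t where "x \<in> topspace G" "t \<in> {0..1}" and xt: "z = susp_pt g0 x t" by (rule topspace_susp_cases[OF zt])
    have c1: "coH_sum \<nu> a (\<lambda>_. x0) g0 = x0" by (simp add: coH_sum_def wedge_fold_def \<nu>0 a0)
    have c2: "coH_sum \<nu> (\<lambda>_. x0) b g0 = x0" by (simp add: coH_sum_def wedge_fold_def \<nu>0 b0)
    show ?thesis unfolding xt
      apply (simp add: psum_pt)
      apply (simp only: susp_fun_pt[of "coH_sum \<nu> a (\<lambda>_. x0)" g0 x0, OF c1] susp_fun_pt[of "coH_sum \<nu> (\<lambda>_. x0) b" g0 x0, OF c2])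
      by (simp add: psum_pt sfold_pt \<nu>0
          susp_fun_pt[of a g0 x0, OF a0] susp_fun_pt[of b g0 x0, OF b0] coH_sum_def wedge_fold_def)
  qed
  have "pointed_homotopic (susp G g0) None (susp X x0) None (susp_fun x0 (coH_sum \<nu> a b))
              (psum g0 (susp_fun x0 (coH_sum \<nu> a (\<lambda>_. x0))) (susp_fun x0 (coH_sum \<nu> (\<lambda>_. x0) b)))"
    by (rule ph_eq[OF s1 N e1 e2])
  then show ?thesis using s2 by (rule ph_trans)
qed

lemma pointed_map_comp: "pointed_map G g0 H h0 f \<Longrightarrow> pointed_map H h0 X x0 g \<Longrightarrow> pointed_map G g0 X x0 (g \<circ> f)"
  unfolding pointed_map_def using continuous_map_compose by fastforce

lemma part2:
  assumes coG: "coH_space G g0 \<nu>G" and coH: "coH_space H h0 \<nu>H"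
    and f: "pointed_map G g0 H h0 f" and g1: "pointed_map H h0 X x0 g1" and g2: "pointed_map H h0 X x0 g2"
  shows "congruent_maps G g0 X x0 (coH_sum \<nu>H g1 g2 \<circ> f) (coH_sum \<nu>G (g1 \<circ> f) (g2 \<circ> f))"
proof -
  have g0: "g0 \<in> topspace G" using coG by (simp add: coH_space_def)
  have \<nu>H0: "\<nu>H h0 = (True, h0)" using coH by (simp add: coH_space_def pointed_map_def)
  have f0: "f g0 = h0" and g10: "g1 h0 = x0" and g20: "g2 h0 = x0"
    using f g1 g2 by (auto simp: pointed_map_def)
  have cs0: "coH_sum \<nu>H g1 g2 h0 = x0" by (simp add: coH_sum_def wedge_fold_def \<nu>H0 g10)
  have N: "None \<in> topspace (susp G g0)" by (rule None_in_susp[OF g0])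
  have A: "pointed_homotopic (susp G g0) None (susp X x0) None (susp_fun x0 (coH_sum \<nu>H g1 g2) \<circ> susp_fun h0 f)
             (psum h0 (susp_fun x0 g1) (susp_fun x0 g2) \<circ> susp_fun h0 f)"
    by (rule ph_right[OF coH_sum_susp[OF coH g1 g2] cont_susp_fun[OF f]]) simp
  have B: "pointed_homotopic (susp G g0) None (susp X x0) None (susp_fun x0 (coH_sum \<nu>G (g1 \<circ> f) (g2 \<circ> f)))
             (psum g0 (susp_fun x0 (g1 \<circ> f)) (susp_fun x0 (g2 \<circ> f)))"
    by (rule coH_sum_susp[OF coG pointed_map_comp[OF f g1] pointed_map_comp[OF f g2]])
  have e: "psum g0 (susp_fun x0 (g1 \<circ> f)) (susp_fun x0 (g2 \<circ> f)) z = (psum h0 (susp_fun x0 g1) (susp_fun x0 g2) \<circ> susp_fun h0 f) z"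
    if zt: "z \<in> topspace (susp G g0)" for z
  proof -
    obtain x t where "x \<in> topspace G" "t \<in> {0..1}" and xt: "z = susp_pt g0 x t" by (rule topspace_susp_cases[OF zt])
    have c1: "(g1 \<circ> f) g0 = x0" and c2: "(g2 \<circ> f) g0 = x0" using f0 g10 g20 by simp_all
    show ?thesis unfolding xt
      by (simp add: susp_fun_pt[of f g0 h0, OF f0] psum_pt susp_fun_pt[of g1 h0 x0, OF g10] susp_fun_pt[of g2 h0 x0, OF g20]
        susp_fun_pt[of "g1 \<circ> f" g0 x0, OF c1] susp_fun_pt[of "g2 \<circ> f" g0 x0, OF c2])
  qed
  have "pointed_homotopic (susp G g0) None (susp X x0) None (susp_fun x0 (coH_sum \<nu>H g1 g2) \<circ> susp_fun h0 f)
             (susp_fun x0 (coH_sum \<nu>G (g1 \<circ> f) (g2 \<circ> f)))"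
    by (rule ph_trans[OF ph_eq[OF A N _ e] ph_sym[OF B]]) simp
  then show ?thesis unfolding congruent_maps_def susp_comp[of "coH_sum \<nu>H g1 g2" h0 x0, OF cs0] .
qed

lemma part3:
  assumes coG: "coH_space G g0 \<nu>G"
    and f1: "pointed_map G g0 H h0 f1" and f2: "pointed_map G g0 H h0 f2" and g: "pointed_map H h0 X x0 g"
  shows "congruent_maps G g0 X x0 (g \<circ> coH_sum \<nu>G f1 f2) (coH_sum \<nu>G (g \<circ> f1) (g \<circ> f2))"
proof -
  have e: "g \<circ> coH_sum \<nu>G f1 f2 = coH_sum \<nu>G (g \<circ> f1) (g \<circ> f2)"
    by (rule ext) (simp add: coH_sum_def wedge_fold_def)
  have "continuous_map (susp G g0) (susp X x0) (susp_fun x0 (coH_sum \<nu>G (g \<circ> f1) (g \<circ> f2)))"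
    using ph_cont[OF coH_sum_susp[OF coG pointed_map_comp[OF f1 g] pointed_map_comp[OF f2 g]]] by simp
  then show ?thesis unfolding congruent_maps_def e by (rule ph_refl) simp
qed

theorem proposition5p13:
  fixes G :: "'a topology" and H :: "'b topology" and X :: "'c topology"
    and g0 :: 'a and h0 :: 'b and x0 :: 'c
    and \<nu>G :: "'a \<Rightarrow> bool \<times> 'a" and \<nu>H :: "'b \<Rightarrow> bool \<times> 'b"
  assumes coG: "coH_space G g0 \<nu>G"
    and coH: "coH_space H h0 \<nu>H"
    and x0: "x0 \<in> topspace X"
  shows
    \<comment> \<open>composition is well defined on congruence classes\<close>
    "(\<forall>f f' g g'. pointed_map G g0 H h0 f \<and> pointed_map G g0 H h0 f' \<and>
        pointed_map H h0 X x0 g \<and> pointed_map H h0 X x0 g' \<and>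
        congruent_maps G g0 H h0 f f' \<and> congruent_maps H h0 X x0 g g'
        \<longrightarrow> congruent_maps G g0 X x0 (g \<circ> f) (g' \<circ> f'))
   \<and> \<comment> \<open>additivity in the second variable\<close>
     (\<forall>f g1 g2. pointed_map G g0 H h0 f \<and> pointed_map H h0 X x0 g1 \<and>
        pointed_map H h0 X x0 g2
        \<longrightarrow> congruent_maps G g0 X x0 (coH_sum \<nu>H g1 g2 \<circ> f)
                                      (coH_sum \<nu>G (g1 \<circ> f) (g2 \<circ> f)))
   \<and> \<comment> \<open>additivity in the first variable\<close>
     (\<forall>f1 f2 g. pointed_map G g0 H h0 f1 \<and> pointed_map G g0 H h0 f2 \<and>
        pointed_map H h0 X x0 g
        \<longrightarrow> congruent_maps G g0 X x0 (g \<circ> coH_sum \<nu>G f1 f2)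
                                      (coH_sum \<nu>G (g \<circ> f1) (g \<circ> f2)))"
proof (intro conjI allI impI)
  fix f f' g g' assume "pointed_map G g0 H h0 f \<and> pointed_map G g0 H h0 f' \<and>
        pointed_map H h0 X x0 g \<and> pointed_map H h0 X x0 g' \<and>
        congruent_maps G g0 H h0 f f' \<and> congruent_maps H h0 X x0 g g'"
  then show "congruent_maps G g0 X x0 (g \<circ> f) (g' \<circ> f')"
    by (elim conjE) (rule part1)
next
  fix f g1 g2 assume "pointed_map G g0 H h0 f \<and> pointed_map H h0 X x0 g1 \<and> pointed_map H h0 X x0 g2"
  then show "congruent_maps G g0 X x0 (coH_sum \<nu>H g1 g2 \<circ> f) (coH_sum \<nu>G (g1 \<circ> f) (g2 \<circ> f))"
    by (elim conjE) (rule part2[OF coG coH])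
next
  fix f1 f2 g assume "pointed_map G g0 H h0 f1 \<and> pointed_map G g0 H h0 f2 \<and> pointed_map H h0 X x0 g"
  then show "congruent_maps G g0 X x0 (g \<circ> coH_sum \<nu>G f1 f2) (coH_sum \<nu>G (g \<circ> f1) (g \<circ> f2))"
    by (elim conjE) (rule part3[OF coG])
qed

end
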